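(* Assume $Q_{12}>0$. For any $\gamma>0$, $$H(\tilde C_i^{(n)}|\tilde{\mathbf X}_{3-i})\ge n[H(X_i|X_{3-i})-\gamma]+\log Q_{12},\quad i=1,2,$$ $$H(\tilde C_1^{(n)}\tilde C_2^{(n)})\ge n[H(X_1X_2)-\gamma]+\log Q_{12}.$$
   Context: Logs base 2. $\mathcal X_1,\mathcal X_2$ finite; $(X_1,X_2)\sim p_{X_1X_2}$, $(K_1,K_2)\sim p_{K_1K_2}$ on $\mathcal X_1\times\mathcal X_2$. At block length $n$, $(\mathbf X_1,\mathbf X_2)\sim p^n_{X_1X_2}$ i.i.d., $(\mathbf K_1,\mathbf K_2)\sim p^n_{K_1K_2}$ i.i.d., keys independent of sources. A distributed source encryption system: finite $\mathcal C_i^{(n)}$, maps $\Phi_i^{(n)}:\mathcal X_i^n\times\mathcal X_i^n\to\mathcal C_i^{(n)}$ (key, plaintext) and $\Psi^{(n)}$, such that there are maps $\phi_i^{(n)}$, $\psi^{(n)}$ with $\Psi^{(n)}(\mathbf k_1,\mathbf k_2,\Phi_1^{(n)}(\mathbf k_1,\mathbf x_1),\Phi_2^{(n)}(\mathbf k_2,\mathbf x_2))=\psi^{(n)}(\phi_1^{(n)}(\mathbf x_1),\phi_2^{(n)}(\mathbf x_2))$ for all arguments. $C_i^{(n)}:=\Phi_i^{(n)}(\mathbf K_i,\mathbf X_i)$. $\mathcal D^{(n)}:=\{(\mathbf x_1,\mathbf x_2):\psi^{(n)}(\phi_1^{(n)}(\mathbf x_1),\phi_2^{(n)}(\mathbf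 x_2))=(\mathbf x_1,\mathbf x_2)\}$. For $\gamma>0$, $\tilde{\mathcal A}^{(n)}_\gamma$ is the set of $(\mathbf x_1,\mathbf x_2)$ with $\bigl|\frac1n\log\frac1{p^n_{X_i|X_{3-i}}(\mathbf x_i|\mathbf x_{3-i})}-H(X_i|X_{3-i})\bigr|\le\gamma$ ($i=1,2$) and $\bigl|\frac1n\log\frac1{p^n_{X_1X_2}(\mathbf x_1,\mathbf x_2)}-H(X_1X_2)\bigr|\le\gamma$, and $\tilde{\mathcal D}^{(n)}_\gamma:=\tilde{\mathcal A}^{(n)}_\gamma\cap\mathcal D^{(n)}$. $Q_{12}:=p^n_{X_1X_2}(\tilde{\mathcal D}^{(n)}_\gamma)$. The random pair $(\tilde{\mathbf X}_1,\tilde{\mathbf X}_2)$ has law $p^n_{X_1X_2}(\mathbf x_1,\mathbf x_2)/Q_{12}$ on $\tilde{\mathcal D}^{(n)}_\gamma$ and $0$ elsewhere, independent of $(\mathbf K_1,\mathbf K_2)$; $\tilde C_i^{(n)}:=\Phi_i^{(n)}(\mathbf K_i,\tilde{\mathbf X}_i)$. Equivalently, the joint law of $(\tilde C_1^{(n)},\tilde C_2^{(n)},\tilde{\mathbf X}_1,\tilde{\mathbf X}_2)$ is that of $(C_1^{(n)},C_2^{(n)},\mathbf X_1,\mathbf X_2)$ conditioned on $(\mathbf X_1,\mathbf X_2)\in\tilde{\mathcal D}^{(n)}_\gamma$. *)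

theory Defs
  imports Complex_Main
begin

definition shannon :: "('x \<Rightarrow> real) \<Rightarrow> 'x set \<Rightarrow> real" where
  "shannon f S = - (\<Sum>x\<in>S. f x * log 2 (f x))"

definition law :: "('w \<Rightarrow> real) \<Rightarrow> 'w set \<Rightarrow> ('w \<Rightarrow> 'y) \<Rightarrow> 'y \<Rightarrow> real" where
  "law P Om g y = (\<Sum>w\<in>{w\<in>Om. g w = y}. P w)"

definition rv_entropy :: "('w \<Rightarrow> real) \<Rightarrow> 'w set \<Rightarrow> ('w \<Rightarrow> 'y) \<Rightarrow> real" where
  "rv_entropy P Om g = shannon (law P Om g) (g ` Om)"

definition rv_cond_entropy ::
  "('w \<Rightarrow> real) \<Rightarrow> 'w set \<Rightarrow> ('w \<Rightarrow> 'y) \<Rightarrow> ('w \<Rightarrow> 'z) \<Rightarrow> real" where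
  "rv_cond_entropy P Om g h = rv_entropy P Om (\<lambda>w. (g w, h w)) - rv_entropy P Om h"

definition marg1 :: "('a \<times> 'b::finite \<Rightarrow> real) \<Rightarrow> 'a \<Rightarrow> real" where
  "marg1 p a = (\<Sum>b\<in>UNIV. p (a, b))"

definition marg2 :: "('a::finite \<times> 'b \<Rightarrow> real) \<Rightarrow> 'b \<Rightarrow> real" where
  "marg2 p b = (\<Sum>a\<in>UNIV. p (a, b))"

definition H12 :: "('a::finite \<times> 'b::finite \<Rightarrow> real) \<Rightarrow> real" where
  "H12 p = shannon p UNIV"

definition H1g2 :: "('a::finite \<times> 'b::finite \<Rightarrow> real) \<Rightarrow> real" where
  "H1g2 p = shannon p UNIV - shannon (marg2 p) UNIV"

definition H2g1 :: "('a::finite \<times> 'b::finite \<Rightarrow> real) \<Rightarrow> real" where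
  "H2g1 p = shannon p UNIV - shannon (marg1 p) UNIV"

definition pn :: "('a \<times> 'b \<Rightarrow> real) \<Rightarrow> nat \<Rightarrow> 'a list \<Rightarrow> 'b list \<Rightarrow> real" where
  "pn p n x1 x2 = (\<Prod>i<n. p (x1 ! i, x2 ! i))"

definition pn_1g2 :: "('a::finite \<times> 'b \<Rightarrow> real) \<Rightarrow> nat \<Rightarrow> 'a list \<Rightarrow> 'b list \<Rightarrow> real" where
  "pn_1g2 p n x1 x2 = (\<Prod>i<n. p (x1 ! i, x2 ! i) / marg2 p (x2 ! i))"

definition pn_2g1 :: "('a \<times> 'b::finite \<Rightarrow> real) \<Rightarrow> nat \<Rightarrow> 'a list \<Rightarrow> 'b list \<Rightarrow> real" where
  "pn_2g1 p n x1 x2 = (\<Prod>i<n. p (x1 ! i, x2 ! i) / marg1 p (x1 ! i))"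

text \<open>Modified typical set A~_gamma^(n). Sequences of probability zero have
  log(1/p) = +infinity and hence are never typical; this is made explicit.\<close>
definition typ_set :: "('a::finite \<times> 'b::finite \<Rightarrow> real) \<Rightarrow> nat \<Rightarrow> real \<Rightarrow> ('a list \<times> 'b list) set" where
  "typ_set p n \<gamma> = {(x1, x2). length x1 = n \<and> length x2 = n \<and> pn p n x1 x2 > 0 \<and>
     \<bar>1 / real n * log 2 (1 / pn_1g2 p n x1 x2) - H1g2 p\<bar> \<le> \<gamma> \<and>
     \<bar>1 / real n * log 2 (1 / pn_2g1 p n x1 x2) - H2g1 p\<bar> \<le> \<gamma> \<and>
     \<bar>1 / real n * log 2 (1 / pn p n x1 x2) - H12 p\<bar> \<le> \<gamma>}"

definition dec_set :: "nat \<Rightarrow> ('a list \<Rightarrow> 'e) \<Rightarrow> ('b list \<Rightarrow> 'f) \<Rightarrow>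
    ('e \<Rightarrow> 'f \<Rightarrow> 'a list \<times> 'b list) \<Rightarrow> ('a list \<times> 'b list) set" where
  "dec_set n \<phi>1 \<phi>2 \<psi> = {(x1, x2). length x1 = n \<and> length x2 = n \<and> \<psi> (\<phi>1 x1) (\<phi>2 x2) = (x1, x2)}"

definition Dtil :: "('a::finite \<times> 'b::finite \<Rightarrow> real) \<Rightarrow> nat \<Rightarrow> real \<Rightarrow> ('a list \<Rightarrow> 'e) \<Rightarrow> ('b list \<Rightarrow> 'f) \<Rightarrow>
    ('e \<Rightarrow> 'f \<Rightarrow> 'a list \<times> 'b list) \<Rightarrow> ('a list \<times> 'b list) set" where
  "Dtil p n \<gamma> \<phi>1 \<phi>2 \<psi> = typ_set p n \<gamma> \<inter> dec_set n \<phi>1 \<phi>2 \<psi>"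

definition Q12 :: "('a::finite \<times> 'b::finite \<Rightarrow> real) \<Rightarrow> nat \<Rightarrow> real \<Rightarrow> ('a list \<Rightarrow> 'e) \<Rightarrow> ('b list \<Rightarrow> 'f) \<Rightarrow>
    ('e \<Rightarrow> 'f \<Rightarrow> 'a list \<times> 'b list) \<Rightarrow> real" where
  "Q12 p n \<gamma> \<phi>1 \<phi>2 \<psi> = (\<Sum>(x1, x2)\<in>Dtil p n \<gamma> \<phi>1 \<phi>2 \<psi>. pn p n x1 x2)"

text \<open>Sample space of (K1, K2, X~1, X~2) at block length n.\<close>
definition Omega :: "nat \<Rightarrow> ('a list \<times> 'b list \<times> 'a list \<times> 'b list) set" where
  "Omega n = {(k1, k2, x1, x2). length k1 = n \<and> length k2 = n \<and> length x1 = n \<and> length x2 = n}"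

definition Ptil :: "('a::finite \<times> 'b::finite \<Rightarrow> real) \<Rightarrow> ('a \<times> 'b \<Rightarrow> real) \<Rightarrow> nat \<Rightarrow> real \<Rightarrow>
    ('a list \<Rightarrow> 'e) \<Rightarrow> ('b list \<Rightarrow> 'f) \<Rightarrow> ('e \<Rightarrow> 'f \<Rightarrow> 'a list \<times> 'b list) \<Rightarrow>
    'a list \<times> 'b list \<times> 'a list \<times> 'b list \<Rightarrow> real" where
  "Ptil p pk n \<gamma> \<phi>1 \<phi>2 \<psi> = (\<lambda>(k1, k2, x1, x2). pn pk n k1 k2 *
     (if (x1, x2) \<in> Dtil p n \<gamma> \<phi>1 \<phi>2 \<psi> then pn p n x1 x2 / Q12 p n \<gamma> \<phi>1 \<phi>2 \<psi> else 0))"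

end

theory Submission
  imports Defs
begin


lemma ent_pointwise:
  assumes "finite Om"
  shows "rv_entropy P Om g = - (\<Sum>w\<in>Om. P w * log 2 (law P Om g (g w)))"
proof -
  have "(\<Sum>y\<in>g ` Om. law P Om g y * log 2 (law P Om g y))
      = (\<Sum>y\<in>g ` Om. \<Sum>w\<in>{w\<in>Om. g w = y}. P w * log 2 (law P Om g (g w)))"
    by (rule sum.cong) (auto simp: law_def sum_distrib_right)
  also have "\<dots> = (\<Sum>w\<in>Om. P w * log 2 (law P Om g (g w)))"
    by (rule sum.image_gen[symmetric]) (rule assms)
  finally show ?thesis unfolding rv_entropy_def shannon_def by simp
qed

lemma law_ge:
  assumes "finite Om" "\<And>w. w \<in> Om \<Longrightarrow> P w \<ge> 0" "w \<in> Om"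
  shows "P w \<le> law P Om g (g w)"
  unfolding law_def using assms by (intro member_le_sum) auto

lemma law_sum:
  assumes "finite Om"
  shows "(\<Sum>z\<in>g ` Om. law P Om g z) = (\<Sum>w\<in>Om. P w)"
  unfolding law_def using sum.image_gen[OF assms, of P g] by simp

lemma ent_lower:
  assumes fin: "finite Om" and nn: "\<And>w. w \<in> Om \<Longrightarrow> P w \<ge> 0" and s1: "(\<Sum>w\<in>Om. P w) = 1"
    and c: "c > 0" and b: "\<And>w. w \<in> Om \<Longrightarrow> P w > 0 \<Longrightarrow> law P Om g (g w) \<le> c"
  shows "rv_entropy P Om g \<ge> - log 2 c"
proof -
  have "(\<Sum>w\<in>Om. P w * (- log 2 c)) \<le> (\<Sum>w\<in>Om. P w * (- log 2 (law P Om g (g w))))"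
  proof (rule sum_mono)
    fix w assume w: "w \<in> Om"
    show "P w * (- log 2 c) \<le> P w * (- log 2 (law P Om g (g w)))"
    proof (cases "P w > 0")
      case True
      have "P w \<le> law P Om g (g w)" by (rule law_ge[OF fin]) (use nn w in auto)
      hence "log 2 (law P Om g (g w)) \<le> log 2 c" using True b[OF w True] by simp
      thus ?thesis using True by (intro mult_left_mono) auto
    next
      case False
      then have "P w = 0" using nn[OF w] by simp
      thus ?thesis by simp
    qed
  qed
  also have "\<dots> = rv_entropy P Om g" using ent_pointwise[OF fin, of P g]
    by (simp add: sum_negf)
  finally show ?thesis using s1 by (simp add: sum_negf sum_distrib_right[symmetric])
qed

lemma cond_ent_lower:
  assumes fin: "finite Om" and nn: "\<And>w. w \<in> Om \<Longrightarrow> P w \<ge> 0" and s1: "(\<Sum>w\<in>Om. P w) = 1"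
    and c: "c > 0" and mnn: "\<And>z. m z \<ge> 0" and ms: "(\<Sum>z\<in>h ` Om. m z) \<le> 1"
    and b: "\<And>w. w \<in> Om \<Longrightarrow> P w > 0 \<Longrightarrow> law P Om (\<lambda>w. (g w, h w)) (g w, h w) \<le> c * m (h w)"
  shows "rv_cond_entropy P Om g h \<ge> - log 2 c"
proof -
  define Lh where "Lh = law P Om h"
  define Lgh where "Lgh = law P Om (\<lambda>w. (g w, h w))"
  have step: "P w * (- log 2 c) + (P w - P w * m (h w) / Lh (h w)) / ln 2
      \<le> P w * (log 2 (Lh (h w)) - log 2 (Lgh (g w, h w)))" if w: "w \<in> Om" for w
  proof (cases "P w > 0")
    case True
    have a1: "P w \<le> Lgh (g w, h w)" unfolding Lgh_def
      using law_ge[OF fin, of P w "\<lambda>w. (g w, h w)"] nn w by auto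
    have a2: "P w \<le> Lh (h w)" unfolding Lh_def
      using law_ge[OF fin, of P w h] nn w by auto
    have a3: "Lgh (g w, h w) \<le> c * m (h w)" unfolding Lgh_def using b[OF w True] by simp
    have mpos: "m (h w) > 0" using a1 a3 True c by (smt (verit) mult_nonneg_nonpos mnn)
    have lpos: "Lh (h w) > 0" using a2 True by simp
    have "log 2 (Lgh (g w, h w)) \<le> log 2 (c * m (h w))" using a1 a3 True by simp
    also have "\<dots> = log 2 c + log 2 (m (h w))" using c mpos by (simp add: log_mult)
    finally have l1: "log 2 (Lgh (g w, h w)) \<le> log 2 c + log 2 (m (h w))" .
    have "ln (m (h w) / Lh (h w)) \<le> m (h w) / Lh (h w) - 1"
      using mpos lpos by (intro ln_le_minus_one) simp
    hence "log 2 (m (h w) / Lh (h w)) \<le> (m (h w) / Lh (h w) - 1) / ln 2"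
      by (simp add: log_def divide_right_mono)
    hence l2: "log 2 (m (h w)) - log 2 (Lh (h w)) \<le> (m (h w) / Lh (h w) - 1) / ln 2"
      using mpos lpos by (simp add: log_divide)
    have "P w * (- log 2 c) + (P w - P w * m (h w) / Lh (h w)) / ln 2
       = P w * (- log 2 c - (m (h w) / Lh (h w) - 1) / ln 2)"
      by (simp add: field_simps)
    also have "\<dots> \<le> P w * (log 2 (Lh (h w)) - log 2 (Lgh (g w, h w)))"
      using l1 l2 True by (intro mult_left_mono) auto
    finally show ?thesis .
  next
    case False
    then have "P w = 0" using nn[OF w] by simp
    thus ?thesis by simp
  qed
  have sumeq: "(\<Sum>w\<in>Om. P w * m (h w) / Lh (h w)) = (\<Sum>z\<in>h ` Om. Lh z * m z / Lh z)"
  proof -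
    have "(\<Sum>w\<in>Om. P w * m (h w) / Lh (h w))
        = (\<Sum>z\<in>h ` Om. \<Sum>w\<in>{w\<in>Om. h w = z}. P w * m (h w) / Lh (h w))"
      by (rule sum.image_gen) (rule fin)
    also have "\<dots> = (\<Sum>z\<in>h ` Om. Lh z * m z / Lh z)"
      by (rule sum.cong) (auto simp: Lh_def law_def sum_distrib_right sum_divide_distrib)
    finally show ?thesis .
  qed
  have "(\<Sum>z\<in>h ` Om. Lh z * m z / Lh z) \<le> (\<Sum>z\<in>h ` Om. m z)"
    by (rule sum_mono) (auto simp: mnn)
  hence S1: "(\<Sum>w\<in>Om. P w * m (h w) / Lh (h w)) \<le> 1" using sumeq ms by simp
  have "(\<Sum>w\<in>Om. P w * (- log 2 c) + (P w - P w * m (h w) / Lh (h w)) / ln 2)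
      \<le> (\<Sum>w\<in>Om. P w * (log 2 (Lh (h w)) - log 2 (Lgh (g w, h w))))"
    by (rule sum_mono) (rule step)
  also have "\<dots> = rv_cond_entropy P Om g h"
    unfolding rv_cond_entropy_def ent_pointwise[OF fin] Lh_def Lgh_def
    by (simp add: sum_subtractf right_diff_distrib)
  finally have main: "(\<Sum>w\<in>Om. P w * (- log 2 c) + (P w - P w * m (h w) / Lh (h w)) / ln 2)
      \<le> rv_cond_entropy P Om g h" .
  have "(\<Sum>w\<in>Om. P w * (- log 2 c) + (P w - P w * m (h w) / Lh (h w)) / ln 2)
     = - log 2 c + (1 - (\<Sum>w\<in>Om. P w * m (h w) / Lh (h w))) / ln 2"
    using s1 by (simp add: sum.distrib sum_divide_distrib[symmetric] sum_subtractf
        sum_distrib_right[symmetric])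
  moreover have "(1 - (\<Sum>w\<in>Om. P w * m (h w) / Lh (h w))) / ln 2 \<ge> 0"
    using S1 by simp
  ultimately show ?thesis using main by linarith
qed



lemma finite_len: "finite {xs :: 'a::finite list. length xs = n}"
  using finite_lists_length_eq[of "UNIV :: 'a set" n] by simp

lemma finite_len2: "finite {(k1 :: 'a::finite list, k2 :: 'b::finite list). length k1 = n \<and> length k2 = n}"
proof -
  have "{(k1 :: 'a list, k2 :: 'b list). length k1 = n \<and> length k2 = n}
    = {xs. length xs = n} \<times> {xs. length xs = n}" by auto
  thus ?thesis using finite_cartesian_product[OF finite_len finite_len] by simp
qed

lemma PS1:
  fixes f :: "'a::finite \<Rightarrow> real"
  shows "(\<Sum>xs\<in>{xs. length xs = n}. \<Prod>i<n. f (xs ! i)) = (\<Sum>a\<in>UNIV. f a) ^ n"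
proof (induction n)
  case 0
  have "{xs :: 'a list. length xs = 0} = {[]}" by auto
  thus ?case by simp
next
  case (Suc n)
  have e: "{xs :: 'a list. length xs = Suc n} = (\<lambda>(a, xs). a # xs) ` (UNIV \<times> {xs. length xs = n})"
    by (auto simp: length_Suc_conv image_iff)
  have i: "inj_on (\<lambda>(a, xs). a # xs) (UNIV \<times> {xs :: 'a list. length xs = n})"
    by (auto simp: inj_on_def)
  have "(\<Sum>xs\<in>{xs. length xs = Suc n}. \<Prod>i<Suc n. f (xs ! i))
      = (\<Sum>(a, xs)\<in>UNIV \<times> {xs. length xs = n}. f a * (\<Prod>i<n. f (xs ! i)))"
    unfolding e by (subst sum.reindex[OF i]) (simp del: prod.lessThan_Suc add: prod.lessThan_Suc_shift case_prod_beta)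
  also have "\<dots> = (\<Sum>a\<in>UNIV. \<Sum>xs\<in>{xs. length xs = n}. f a * (\<Prod>i<n. f (xs ! i)))"
    by (simp add: sum.cartesian_product)
  also have "\<dots> = (\<Sum>a\<in>UNIV. f a) * (\<Sum>xs\<in>{xs. length xs = n}. \<Prod>i<n. f (xs ! i))"
    by (rule sum_product[symmetric])
  finally show ?case using Suc by simp
qed

lemma eqK: "{(k1 :: 'a list, k2 :: 'b list). length k1 = m \<and> length k2 = m} = {k1. length k1 = m} \<times> {k2. length k2 = m}"
  by auto

lemma PS2:
  fixes f :: "'a::finite \<times> 'b::finite \<Rightarrow> real"
  shows "(\<Sum>(k1, k2)\<in>{(k1, k2). length k1 = n \<and> length k2 = n}. pn f n k1 k2) = (\<Sum>z\<in>UNIV. f z) ^ n"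
proof (induction n)
  case 0
  have "{(k1 :: 'a list, k2 :: 'b list). length k1 = 0 \<and> length k2 = 0} = {([], [])}" by auto
  thus ?case by (simp add: pn_def)
next
  case (Suc n)
  let ?K = "{(k1 :: 'a list, k2 :: 'b list). length k1 = n \<and> length k2 = n}"
  have e: "{(k1 :: 'a list, k2 :: 'b list). length k1 = Suc n \<and> length k2 = Suc n}
     = (\<lambda>((a, b), (k1, k2)). (a # k1, b # k2)) ` (UNIV \<times> ?K)"
    by (auto simp: length_Suc_conv image_iff)
  have i: "inj_on (\<lambda>((a, b), (k1, k2)). (a # k1, b # k2)) (UNIV \<times> ?K)"
    by (auto simp: inj_on_def)
  have "(\<Sum>(k1, k2)\<in>{(k1, k2). length k1 = Suc n \<and> length k2 = Suc n}. pn f (Suc n) k1 k2)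
      = (\<Sum>(z, k)\<in>UNIV \<times> ?K. f z * pn f n (fst k) (snd k))"
    unfolding e by (subst sum.reindex[OF i]) (simp del: prod.lessThan_Suc add: pn_def prod.lessThan_Suc_shift case_prod_beta)
  also have "\<dots> = (\<Sum>z\<in>UNIV. \<Sum>k\<in>?K. f z * pn f n (fst k) (snd k))"
    by (simp add: sum.cartesian_product)
  also have "\<dots> = (\<Sum>z\<in>UNIV. f z) * (\<Sum>k\<in>?K. pn f n (fst k) (snd k))"
    by (rule sum_product[symmetric])
  finally show ?case using Suc.IH unfolding eqK by (simp add: case_prod_beta)
qed



lemma key_bound:
  assumes fin: "finite Om" and nn: "\<And>w. w \<in> Om \<Longrightarrow> P w \<ge> (0::real)"
    and finK: "finite K" and ann: "\<And>k. k \<in> K \<Longrightarrow> a k \<ge> 0" and as: "(\<Sum>k\<in>K. a k) = 1"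
    and bnn: "b \<ge> 0"
    and inj: "inj_on \<pi> {w\<in>Om. R w \<and> P w > 0}"
    and bd: "\<And>w. w \<in> Om \<Longrightarrow> R w \<Longrightarrow> P w > 0 \<Longrightarrow> \<pi> w \<in> K \<and> P w \<le> a (\<pi> w) * b"
  shows "(\<Sum>w\<in>{w\<in>Om. R w}. P w) \<le> b"
proof -
  let ?S = "{w\<in>Om. R w \<and> P w > 0}"
  have "(\<Sum>w\<in>{w\<in>Om. R w}. P w) = (\<Sum>w\<in>?S. P w)"
    using fin nn by (intro sum.mono_neutral_right) force+
  also have "\<dots> \<le> (\<Sum>w\<in>?S. a (\<pi> w) * b)"
    by (rule sum_mono) (use bd in auto)
  also have "\<dots> = (\<Sum>k\<in>\<pi> ` ?S. a k) * b"
    by (simp add: sum.reindex[OF inj] sum_distrib_right)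
  also have "\<dots> \<le> (\<Sum>k\<in>K. a k) * b"
    using bd ann finK bnn by (intro mult_right_mono sum_mono2) auto
  finally show ?thesis using as by simp
qed

lemma typ_bound:
  fixes q H \<gamma> :: real
  assumes q: "q > 0" and t: "\<bar>1 / real n * log 2 (1 / q) - H\<bar> \<le> \<gamma>" and z: "n = 0 \<Longrightarrow> q = 1"
  shows "q \<le> 2 powr (- (real n * (H - \<gamma>)))"
proof (cases "n = 0")
  case True thus ?thesis using z by simp
next
  case False
  hence np: "real n > 0" by simp
  have "H - \<gamma> \<le> 1 / real n * log 2 (1 / q)" using t by linarith
  hence "real n * (H - \<gamma>) \<le> log 2 (1 / q)" using np by (simp add: field_simps)
  hence "log 2 q \<le> - (real n * (H - \<gamma>))" using q by (simp add: log_divide)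
  hence "2 powr (log 2 q) \<le> 2 powr (- (real n * (H - \<gamma>)))" by simp
  thus ?thesis using q by simp
qed

lemma typ_facts:
  fixes p :: "'a::finite \<times> 'b::finite \<Rightarrow> real"
  assumes pnn: "\<And>z. p z \<ge> 0" and x: "(x1, x2) \<in> typ_set p n \<gamma>"
  shows "pn p n x1 x2 \<le> 2 powr (- (real n * (H1g2 p - \<gamma>))) * (\<Prod>i<n. marg2 p (x2 ! i))"
    and "pn p n x1 x2 \<le> 2 powr (- (real n * (H2g1 p - \<gamma>))) * (\<Prod>i<n. marg1 p (x1 ! i))"
    and "pn p n x1 x2 \<le> 2 powr (- (real n * (H12 p - \<gamma>)))"
proof -
  have pos: "pn p n x1 x2 > 0" using x by (simp add: typ_set_def)
  have fpos: "p (x1 ! i, x2 ! i) > 0" if "i < n" for i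
  proof -
    have "pn p n x1 x2 \<noteq> 0" using pos by simp
    hence "p (x1 ! i, x2 ! i) \<noteq> 0" using that by (auto simp: pn_def)
    thus ?thesis using pnn[of "(x1 ! i, x2 ! i)"] by linarith
  qed
  have m2pos: "marg2 p (x2 ! i) > 0" if "i < n" for i
  proof -
    have "p (x1 ! i, x2 ! i) \<le> marg2 p (x2 ! i)" unfolding marg2_def
      by (rule member_le_sum[of "x1 ! i" UNIV "\<lambda>a. p (a, x2 ! i)", simplified]) (use pnn in auto)
    thus ?thesis using fpos[OF that] by linarith
  qed
  have m1pos: "marg1 p (x1 ! i) > 0" if "i < n" for i
  proof -
    have "p (x1 ! i, x2 ! i) \<le> marg1 p (x1 ! i)" unfolding marg1_def
      by (rule member_le_sum[of "x2 ! i" UNIV "\<lambda>b. p (x1 ! i, b)", simplified]) (use pnn in auto)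
    thus ?thesis using fpos[OF that] by linarith
  qed
  have M2: "(\<Prod>i<n. marg2 p (x2 ! i)) > 0" using m2pos by (intro prod_pos) auto
  have M1: "(\<Prod>i<n. marg1 p (x1 ! i)) > 0" using m1pos by (intro prod_pos) auto
  have e2: "pn_1g2 p n x1 x2 = pn p n x1 x2 / (\<Prod>i<n. marg2 p (x2 ! i))"
    unfolding pn_1g2_def pn_def by (rule prod_dividef)
  have e1: "pn_2g1 p n x1 x2 = pn p n x1 x2 / (\<Prod>i<n. marg1 p (x1 ! i))"
    unfolding pn_2g1_def pn_def by (rule prod_dividef)
  have b2: "pn_1g2 p n x1 x2 \<le> 2 powr (- (real n * (H1g2 p - \<gamma>)))"
    by (rule typ_bound) (use x pos M2 e2 in \<open>auto simp: typ_set_def pn_1g2_def\<close>)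
  have b1: "pn_2g1 p n x1 x2 \<le> 2 powr (- (real n * (H2g1 p - \<gamma>)))"
    by (rule typ_bound) (use x pos M1 e1 in \<open>auto simp: typ_set_def pn_2g1_def\<close>)
  show "pn p n x1 x2 \<le> 2 powr (- (real n * (H12 p - \<gamma>)))"
    by (rule typ_bound) (use x pos in \<open>auto simp: typ_set_def pn_def\<close>)
  show "pn p n x1 x2 \<le> 2 powr (- (real n * (H1g2 p - \<gamma>))) * (\<Prod>i<n. marg2 p (x2 ! i))"
    using b2 M2 unfolding e2 by (simp add: divide_le_eq)
  show "pn p n x1 x2 \<le> 2 powr (- (real n * (H2g1 p - \<gamma>))) * (\<Prod>i<n. marg1 p (x1 ! i))"
    using b1 M1 unfolding e1 by (simp add: divide_le_eq)
qed



lemma marg2_sum: "(\<Sum>z\<in>UNIV. p z) = 1 \<Longrightarrow> (\<Sum>b\<in>UNIV. marg2 (p :: 'a::finite \<times> 'b::finite \<Rightarrow> real) b) = 1"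
proof -
  assume h: "(\<Sum>z\<in>UNIV. p z) = 1"
  have "(\<Sum>b\<in>UNIV. marg2 p b) = (\<Sum>b\<in>UNIV. \<Sum>a\<in>UNIV. p (a, b))" unfolding marg2_def ..
  also have "\<dots> = (\<Sum>a\<in>UNIV. \<Sum>b\<in>UNIV. p (a, b))" by (rule sum.swap)
  also have "\<dots> = (\<Sum>z\<in>UNIV \<times> UNIV. p z)" using sum.cartesian_product[of "\<lambda>a b. p (a, b)" UNIV UNIV] by simp
  finally show ?thesis using h by simp
qed
   
lemma marg1_sum: "(\<Sum>z\<in>UNIV. p z) = 1 \<Longrightarrow> (\<Sum>a\<in>UNIV. marg1 (p :: 'a::finite \<times> 'b::finite \<Rightarrow> real) a) = 1"
proof -
  assume h: "(\<Sum>z\<in>UNIV. p z) = 1"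
  have "(\<Sum>a\<in>UNIV. marg1 p a) = (\<Sum>a\<in>UNIV. \<Sum>b\<in>UNIV. p (a, b))" unfolding marg1_def ..
  also have "\<dots> = (\<Sum>z\<in>UNIV \<times> UNIV. p z)" using sum.cartesian_product[of "\<lambda>a b. p (a, b)" UNIV UNIV] by simp
  finally show ?thesis using h by simp
qed

lemma m_sum_le:
  fixes m :: "'a::finite \<Rightarrow> real"
  assumes "\<And>a. m a \<ge> 0" "(\<Sum>a\<in>UNIV. m a) = 1" "A \<subseteq> {xs. length xs = n}"
  shows "(\<Sum>xs\<in>A. \<Prod>i<n. m (xs ! i)) \<le> 1"
proof -
  have "(\<Sum>xs\<in>A. \<Prod>i<n. m (xs ! i)) \<le> (\<Sum>xs\<in>{xs. length xs = n}. \<Prod>i<n. m (xs ! i))"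
    using assms finite_len by (intro sum_mono2) (auto intro: prod_nonneg)
  also have "\<dots> = 1" using PS1[of m n] assms by simp
  finally show ?thesis .
qed



theorem lemma3:
  fixes p pk :: "'a::finite \<times> 'b::finite \<Rightarrow> real"
    and n :: nat and \<gamma> :: real
    and \<Phi>1 :: "'a list \<Rightarrow> 'a list \<Rightarrow> 'c"
    and \<Phi>2 :: "'b list \<Rightarrow> 'b list \<Rightarrow> 'd"
    and \<Psi> :: "'a list \<Rightarrow> 'b list \<Rightarrow> 'c \<Rightarrow> 'd \<Rightarrow> 'a list \<times> 'b list"
    and \<phi>1 :: "'a list \<Rightarrow> 'e" and \<phi>2 :: "'b list \<Rightarrow> 'f"
    and \<psi> :: "'e \<Rightarrow> 'f \<Rightarrow> 'a list \<times> 'b list"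
  assumes p_nonneg: "\<And>z. p z \<ge> 0" and p_sum: "(\<Sum>z\<in>UNIV. p z) = 1"
    and pk_nonneg: "\<And>z. pk z \<ge> 0" and pk_sum: "(\<Sum>z\<in>UNIV. pk z) = 1"
    and decode: "\<And>k1 k2 x1 x2. length k1 = n \<Longrightarrow> length k2 = n \<Longrightarrow> length x1 = n \<Longrightarrow> length x2 = n \<Longrightarrow>
        \<Psi> k1 k2 (\<Phi>1 k1 x1) (\<Phi>2 k2 x2) = \<psi> (\<phi>1 x1) (\<phi>2 x2)"
    and gamma_pos: "\<gamma> > 0"
    and Q_pos: "Q12 p n \<gamma> \<phi>1 \<phi>2 \<psi> > 0"
  shows "(rv_cond_entropy (Ptil p pk n \<gamma> \<phi>1 \<phi>2 \<psi>) (Omega n)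
           (\<lambda>(k1, k2, x1, x2). \<Phi>1 k1 x1) (\<lambda>(k1, k2, x1, x2). x2)
         \<ge> real n * (H1g2 p - \<gamma>) + log 2 (Q12 p n \<gamma> \<phi>1 \<phi>2 \<psi>)) \<and>
         (rv_cond_entropy (Ptil p pk n \<gamma> \<phi>1 \<phi>2 \<psi>) (Omega n)
           (\<lambda>(k1, k2, x1, x2). \<Phi>2 k2 x2) (\<lambda>(k1, k2, x1, x2). x1)
         \<ge> real n * (H2g1 p - \<gamma>) + log 2 (Q12 p n \<gamma> \<phi>1 \<phi>2 \<psi>)) \<and>
         (rv_entropy (Ptil p pk n \<gamma> \<phi>1 \<phi>2 \<psi>) (Omega n)
           (\<lambda>(k1, k2, x1, x2). (\<Phi>1 k1 x1, \<Phi>2 k2 x2))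
         \<ge> real n * (H12 p - \<gamma>) + log 2 (Q12 p n \<gamma> \<phi>1 \<phi>2 \<psi>))"
proof -
  define P where "P = Ptil p pk n \<gamma> \<phi>1 \<phi>2 \<psi>"
  define Om where "Om = (Omega n :: ('a list \<times> 'b list \<times> 'a list \<times> 'b list) set)"
  define D where "D = Dtil p n \<gamma> \<phi>1 \<phi>2 \<psi>"
  define Q where "Q = Q12 p n \<gamma> \<phi>1 \<phi>2 \<psi>"
  define K where "K = {(k1 :: 'a list, k2 :: 'b list). length k1 = n \<and> length k2 = n}"
  define a where "a = (\<lambda>k :: 'a list \<times> 'b list. pn pk n (fst k) (snd k))"
  define \<pi> where "\<pi> = (\<lambda>(k1 :: 'a list, k2 :: 'b list, x1 :: 'a list, x2 :: 'b list). (k1, k2))"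
  have Qpos: "Q > 0" using Q_pos by (simp add: Q_def)
  have Peq: "P (k1, k2, x1, x2) = a (k1, k2) * (if (x1, x2) \<in> D then pn p n x1 x2 / Q else 0)"
    for k1 k2 x1 x2
    by (simp add: P_def Ptil_def a_def D_def Q_def)
  have pnp: "pn p n x1 x2 \<ge> 0" for x1 x2 unfolding pn_def using p_nonneg by (intro prod_nonneg) auto
  have ann: "a k \<ge> 0" for k unfolding a_def pn_def using pk_nonneg by (intro prod_nonneg) auto
  have Pnn: "P w \<ge> 0" for w
    using ann pnp Qpos by (cases w) (auto simp: Peq)
  have finK: "finite K" unfolding K_def by (rule finite_len2)
  have as: "(\<Sum>k\<in>K. a k) = 1"
    using PS2[of pk n] pk_sum unfolding K_def a_def by (simp add: case_prod_beta)
  have DX: "D \<subseteq> K'" if "K' = {(x1 :: 'a list, x2 :: 'b list). length x1 = n \<and> length x2 = n}" for K'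
    using that by (auto simp: D_def Dtil_def dec_set_def)
  have Ddec: "\<Psi> k1 k2 (\<Phi>1 k1 x1) (\<Phi>2 k2 x2) = (x1, x2)"
    if "(x1, x2) \<in> D" "length k1 = n" "length k2 = n" for k1 k2 x1 x2
  proof -
    have "length x1 = n" "length x2 = n" "\<psi> (\<phi>1 x1) (\<phi>2 x2) = (x1, x2)"
      using that(1) by (auto simp: D_def Dtil_def dec_set_def)
    thus ?thesis using decode that by simp
  qed
  have Dtyp: "(x1, x2) \<in> typ_set p n \<gamma>" if "(x1, x2) \<in> D" for x1 x2
    using that by (simp add: D_def Dtil_def)
  have Ppos: "(x1, x2) \<in> D \<and> P (k1, k2, x1, x2) = a (k1, k2) * (pn p n x1 x2 / Q)"
    if "P (k1, k2, x1, x2) > 0" for k1 k2 x1 x2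
    using that by (cases "(x1, x2) \<in> D") (auto simp: Peq)
  define f where "f = (\<lambda>(k :: 'a list \<times> 'b list, x :: 'a list \<times> 'b list). (fst k, snd k, fst x, snd x))"
  have OmE: "Om = f ` (K \<times> K)"
    unfolding Om_def Omega_def f_def K_def by (auto simp: image_iff)
  have finj: "inj_on f (K \<times> K)" unfolding f_def by (auto simp: inj_on_def)
  have finOm: "finite Om" unfolding OmE using finK by simp
  have s1: "(\<Sum>w\<in>Om. P w) = 1"
  proof -
    have "(\<Sum>w\<in>Om. P w) = (\<Sum>(k, x)\<in>K \<times> K. a k * (if x \<in> D then pn p n (fst x) (snd x) / Q else 0))"
      unfolding OmE by (subst sum.reindex[OF finj]) (auto simp: f_def Peq case_prod_beta intro!: sum.cong)
    also have "\<dots> = (\<Sum>k\<in>K. a k) * (\<Sum>x\<in>K. if x \<in> D then pn p n (fst x) (snd x) / Q else 0)"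
      by (simp add: sum_product sum.cartesian_product)
    also have "(\<Sum>x\<in>K. if x \<in> D then pn p n (fst x) (snd x) / Q else 0) = (\<Sum>x\<in>K \<inter> D. pn p n (fst x) (snd x) / Q)"
      by (rule sum.inter_restrict[symmetric]) (rule finK)
    also have "K \<inter> D = D" using DX[OF K_def] by blast
    also have "(\<Sum>x\<in>D. pn p n (fst x) (snd x) / Q) = Q / Q"
      by (simp add: sum_divide_distrib[symmetric] Q_def Q12_def D_def case_prod_beta)
    finally show ?thesis using as Qpos by simp
  qed
  have OmK: "(k1, k2) \<in> K" if "(k1, k2, x1, x2) \<in> Om" for k1 k2 x1 x2
    using that by (simp add: Om_def Omega_def K_def)
  have LB: "(\<Sum>w\<in>{w\<in>Om. R w}. P w) \<le> b"
    if b0: "b \<ge> 0"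
      and inj: "\<And>k1 k2 x1 x2 y1 y2. (k1, k2, x1, x2) \<in> Om \<Longrightarrow> (k1, k2, y1, y2) \<in> Om \<Longrightarrow>
          R (k1, k2, x1, x2) \<Longrightarrow> R (k1, k2, y1, y2) \<Longrightarrow> (x1, x2) \<in> D \<Longrightarrow> (y1, y2) \<in> D \<Longrightarrow> (x1, x2) = (y1, y2)"
      and bd: "\<And>k1 k2 x1 x2. (k1, k2, x1, x2) \<in> Om \<Longrightarrow> R (k1, k2, x1, x2) \<Longrightarrow> (x1, x2) \<in> D \<Longrightarrow>
          pn p n x1 x2 / Q \<le> b"
    for R b
  proof (rule key_bound[OF finOm _ finK _ as b0, where \<pi> = \<pi>])
    show "inj_on \<pi> {w \<in> Om. R w \<and> 0 < P w}"
    proof (rule inj_onI)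
      fix w1 w2 assume h1: "w1 \<in> {w \<in> Om. R w \<and> 0 < P w}" and h2: "w2 \<in> {w \<in> Om. R w \<and> 0 < P w}"
        and e: "\<pi> w1 = \<pi> w2"
      obtain k1 k2 x1 x2 where w1: "w1 = (k1, k2, x1, x2)" by (cases w1) auto
      obtain l1 l2 y1 y2 where w2: "w2 = (l1, l2, y1, y2)" by (cases w2) auto
      have "l1 = k1" "l2 = k2" using e by (auto simp: w1 w2 \<pi>_def)
      thus "w1 = w2" using h1 h2 inj[of k1 k2 x1 x2 y1 y2] Ppos[of k1 k2 x1 x2] Ppos[of k1 k2 y1 y2]
        by (auto simp: w1 w2)
    qed
    fix w assume w: "w \<in> Om" "R w" "0 < P w"
    obtain k1 k2 x1 x2 where w1: "w = (k1, k2, x1, x2)" by (cases w) auto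
    have D: "(x1, x2) \<in> D" and Pe: "P w = a (k1, k2) * (pn p n x1 x2 / Q)"
      using Ppos[of k1 k2 x1 x2] w by (auto simp: w1)
    have "P w \<le> a (k1, k2) * b" unfolding Pe
      using bd[of k1 k2 x1 x2] w D ann by (intro mult_left_mono) (auto simp: w1)
    thus "\<pi> w \<in> K \<and> P w \<le> a (\<pi> w) * b" using OmK w by (auto simp: w1 \<pi>_def)
  qed (auto simp: ann Pnn)
  have logc: "- log 2 (2 powr (- (real n * (H - \<gamma>))) / Q) = real n * (H - \<gamma>) + log 2 Q" for H
    using Qpos by (simp add: log_divide)
  have pnp: "pn p n x1 x2 \<ge> 0" for x1 x2 unfolding pn_def using p_nonneg by (intro prod_nonneg) auto
  have divb: "pn p n x1 x2 / Q \<le> B / Q" if "pn p n x1 x2 \<le> B" for x1 x2 B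
    using that Qpos by (simp add: divide_right_mono)
  have OmL: "length k1 = n" "length k2 = n" "length x1 = n" "length x2 = n"
    if "(k1, k2, x1, x2) \<in> Om" for k1 k2 x1 x2
    using that by (auto simp: Om_def Omega_def)
  have m2nn: "(\<Prod>i<n. marg2 p (xs ! i)) \<ge> 0" for xs
    unfolding marg2_def using p_nonneg by (intro prod_nonneg sum_nonneg) auto
  have m1nn: "(\<Prod>i<n. marg1 p (xs ! i)) \<ge> 0" for xs
    unfolding marg1_def using p_nonneg by (intro prod_nonneg sum_nonneg) auto
  have DecOm: "(y1, y2) = \<Psi> l1 l2 (\<Phi>1 l1 y1) (\<Phi>2 l2 y2)"
    if "(y1, y2) \<in> D" "(l1, l2, y1, y2) \<in> Om" for l1 l2 y1 y2
    using Ddec[of y1 y2 l1 l2] that OmL[OF that(2)] by simp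
  let ?G1 = "\<lambda>(k1 :: 'a list, k2 :: 'b list, x1 :: 'a list, x2 :: 'b list). \<Phi>1 k1 x1"
  let ?H1 = "\<lambda>(k1 :: 'a list, k2 :: 'b list, x1 :: 'a list, x2 :: 'b list). x2"
  let ?c1 = "2 powr (- (real n * (H1g2 p - \<gamma>))) / Q"
  let ?M2 = "\<lambda>xs. \<Prod>i<n. marg2 p (xs ! i)"
  have b1: "law P Om (\<lambda>w. (?G1 w, ?H1 w)) (?G1 w, ?H1 w) \<le> ?c1 * ?M2 (?H1 w)"
    if w: "w \<in> Om" "P w > 0" for w
  proof -
    obtain k1 k2 x1 x2 where w1: "w = (k1, k2, x1, x2)" by (cases w) auto
    show ?thesis unfolding law_def w1
      apply simp
      apply (rule LB)
      subgoal using Qpos m2nn by simp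
      subgoal for l1 l2 y1 y2 z1 z2 using DecOm[of y1 y2 l1 l2] DecOm[of z1 z2 l1 l2] by auto
      subgoal for l1 l2 y1 y2
        using typ_facts(1)[OF p_nonneg Dtyp[of y1 y2]] divb by auto
      done
  qed
  have C1: "rv_cond_entropy P Om ?G1 ?H1 \<ge> - log 2 ?c1"
  proof (rule cond_ent_lower[OF finOm _ s1, where m = ?M2])
    show "(\<Sum>z\<in>?H1 ` Om. ?M2 z) \<le> 1"
      using marg2_sum[OF p_sum] m2nn
      by (intro m_sum_le) (auto simp: marg2_def Om_def Omega_def intro: sum_nonneg p_nonneg)
    show "\<And>w. w \<in> Om \<Longrightarrow> 0 < P w \<Longrightarrow> law P Om (\<lambda>w. (?G1 w, ?H1 w)) (?G1 w, ?H1 w) \<le> ?c1 * ?M2 (?H1 w)"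
      by (rule b1)
  qed (auto simp: Pnn Qpos m2nn)
  let ?G2 = "\<lambda>(k1 :: 'a list, k2 :: 'b list, x1 :: 'a list, x2 :: 'b list). \<Phi>2 k2 x2"
  let ?H2 = "\<lambda>(k1 :: 'a list, k2 :: 'b list, x1 :: 'a list, x2 :: 'b list). x1"
  let ?c2 = "2 powr (- (real n * (H2g1 p - \<gamma>))) / Q"
  let ?M1 = "\<lambda>xs. \<Prod>i<n. marg1 p (xs ! i)"
  have b2: "law P Om (\<lambda>w. (?G2 w, ?H2 w)) (?G2 w, ?H2 w) \<le> ?c2 * ?M1 (?H2 w)"
    if w: "w \<in> Om" "P w > 0" for w
  proof -
    obtain k1 k2 x1 x2 where w1: "w = (k1, k2, x1, x2)" by (cases w) auto
    show ?thesis unfolding law_def w1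
      apply simp
      apply (rule LB)
      subgoal using Qpos m1nn by simp
      subgoal for l1 l2 y1 y2 z1 z2 using DecOm[of y1 y2 l1 l2] DecOm[of z1 z2 l1 l2] by auto
      subgoal for l1 l2 y1 y2
        using typ_facts(2)[OF p_nonneg Dtyp[of y1 y2]] divb by auto
      done
  qed
  have C2: "rv_cond_entropy P Om ?G2 ?H2 \<ge> - log 2 ?c2"
  proof (rule cond_ent_lower[OF finOm _ s1, where m = ?M1])
    show "(\<Sum>z\<in>?H2 ` Om. ?M1 z) \<le> 1"
      using marg1_sum[OF p_sum] m1nn
      by (intro m_sum_le) (auto simp: marg1_def Om_def Omega_def intro: sum_nonneg p_nonneg)
    show "\<And>w. w \<in> Om \<Longrightarrow> 0 < P w \<Longrightarrow> law P Om (\<lambda>w. (?G2 w, ?H2 w)) (?G2 w, ?H2 w) \<le> ?c2 * ?M1 (?H2 w)"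
      by (rule b2)
  qed (auto simp: Pnn Qpos m1nn)
  let ?G3 = "\<lambda>(k1 :: 'a list, k2 :: 'b list, x1 :: 'a list, x2 :: 'b list). (\<Phi>1 k1 x1, \<Phi>2 k2 x2)"
  let ?c3 = "2 powr (- (real n * (H12 p - \<gamma>))) / Q"
  have b3: "law P Om ?G3 (?G3 w) \<le> ?c3"
    if w: "w \<in> Om" "P w > 0" for w
  proof -
    obtain k1 k2 x1 x2 where w1: "w = (k1, k2, x1, x2)" by (cases w) auto
    show ?thesis unfolding law_def w1
      apply simp
      apply (rule LB)
      subgoal using Qpos by simp
      subgoal for l1 l2 y1 y2 z1 z2 using DecOm[of y1 y2 l1 l2] DecOm[of z1 z2 l1 l2] by auto
      subgoal for l1 l2 y1 y2
        using typ_facts(3)[OF p_nonneg Dtyp[of y1 y2]] divb by auto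
      done
  qed
  have C3: "rv_entropy P Om ?G3 \<ge> - log 2 ?c3"
    by (rule ent_lower[OF finOm _ s1]) (auto simp: Pnn Qpos b3)
  show ?thesis
    unfolding P_def[symmetric] Om_def[symmetric] Q_def[symmetric]
    using C1 C2 C3 unfolding logc by simp
qed


end
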